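(* For every non-negative integer $d$, $$\sum_{a\in A_+(d)}\frac{\chi_t(a)}{a}=(-1)^d\frac{b_d(\chi_t)}{L_d}\quad\text{in } K[t].$$
   Context: $q$ is a power of a prime, $A=\mathbb{F}_q[\theta]$, $K=\mathbb{F}_q(\theta)$, $A_+(d)$ is the set of monic polynomials of degree $d$ in $A$. $t$ is an indeterminate and $\chi_t:A\to A[t]$ is the $\mathbb{F}_q$-algebra morphism with $\theta\mapsto t$. $D_d$ is the product of all monic polynomials of degree $d$ in $A$, $L_d$ is the least common multiple of all polynomials of degree $d$ in $A$, and $D_0=L_0=1$. For $f:A\to A[t]$, $M_d(f)(z):=\sum_{b\in A_+(d)} f(b)\prod_{a\in A_+(d)\setminus\{b\}}(z-a)\in A[t][z]$. The Wagner coefficients are $b_d(\chi_t):=(-1)^d\frac{L_d}{D_d}M_d(\chi_t)(0)\in K[t]$. *)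

theory Defs
  imports "HOL-Computational_Algebra.Polynomial_Factorial" "HOL-Computational_Algebra.Euclidean_Algorithm"
begin

text \<open>F_q is modelled by a finite field type 'a (its cardinality q is a prime power).
  A = F_q[theta] is 'a poly; A[t] is 'a poly poly (outer variable t, coefficients in A);
  A[t][z] is 'a poly poly poly; K = 'a poly fract; K[t] is 'a poly fract poly.\<close>

definition Aplus :: "nat \<Rightarrow> ('a::field) poly set" where
  "Aplus d = {p. lead_coeff p = 1 \<and> degree p = d}"

text \<open>chi_t : A -> A[t], the F_q-algebra morphism with theta |-> t.\<close>
definition chi_t :: "('a::field) poly \<Rightarrow> 'a poly poly" where
  "chi_t a = map_poly (\<lambda>c. [:c:]) a"

definition Dd :: "nat \<Rightarrow> ('a::field) poly" where
  "Dd d = (if d = 0 then 1 else (\<Prod>a\<in>Aplus d. a))"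

definition Ld :: "nat \<Rightarrow> ('a::field_gcd) poly" where
  "Ld d = (if d = 0 then 1 else Lcm {p. p \<noteq> 0 \<and> degree p = d})"

definition Md :: "nat \<Rightarrow> (('a::field) poly \<Rightarrow> 'a poly poly) \<Rightarrow> 'a poly poly poly" where
  "Md d f = (\<Sum>b\<in>Aplus d. smult (f b) (\<Prod>a\<in>Aplus d - {b}. [:- [:a:], 1:]))"

definition to_Kt :: "('a::field) poly poly \<Rightarrow> 'a poly fract poly" where
  "to_Kt p = map_poly to_fract p"

definition wagner_b :: "nat \<Rightarrow> ('a::field_gcd) poly fract poly" where
  "wagner_b d = smult ((-1) ^ d * to_fract (Ld d) / to_fract (Dd d))
                      (to_Kt (poly (Md d chi_t) 0))"

end

theory Submission
  imports Defs
begin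

lemma Aplus_0: "Aplus 0 = {1::'a::field poly}"
  by (auto simp: Aplus_def elim!: degree_eq_zeroE)

lemma Aplus_Suc: "Aplus (Suc d) = (\<lambda>(c,p). pCons c p) ` (UNIV \<times> (Aplus d :: 'a::field poly set))"
proof (rule set_eqI, rule iffI)
  fix q :: "'a poly" assume q: "q \<in> Aplus (Suc d)"
  obtain c p where qp: "q = pCons c p" by (cases q) auto
  with q have "p \<noteq> 0" by (auto simp: Aplus_def)
  with q qp have "p \<in> Aplus d" by (auto simp: Aplus_def)
  with qp show "q \<in> (\<lambda>(c,p). pCons c p) ` (UNIV \<times> Aplus d)" by auto
next
  fix q :: "'a poly" assume "q \<in> (\<lambda>(c,p). pCons c p) ` (UNIV \<times> Aplus d)"
  then obtain c p where qp: "q = pCons c p" "p \<in> Aplus d" by auto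
  then have "p \<noteq> 0" by (auto simp: Aplus_def)
  with qp show "q \<in> Aplus (Suc d)" by (auto simp: Aplus_def)
qed

lemma Aplus_finite_card:
  "finite (Aplus d :: 'a::{field,finite} poly set) \<and> card (Aplus d :: 'a poly set) = card (UNIV :: 'a set) ^ d"
proof (induction d)
  case 0 then show ?case by (simp add: Aplus_0)
next
  case (Suc d)
  have inj: "inj_on (\<lambda>(c,p). pCons c p) (UNIV \<times> (Aplus d :: 'a poly set))"
    by (auto simp: inj_on_def)
  show ?case unfolding Aplus_Suc using Suc inj
    by (simp add: card_image card_cartesian_product)
qed

lemma pow_card_field: "(x::'a::{field,finite}) ^ card (UNIV :: 'a set) = x"
proof (cases "x = 0")
  case True then show ?thesis by (simp add: power_0_left)
next
  case False
  let ?U = "UNIV - {0::'a}"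
  have bij: "bij_betw (\<lambda>y. x * y) ?U ?U"
    using False by (intro bij_betw_byWitness[where f'="\<lambda>y. y / x"]) auto
  have "(\<Prod>y\<in>?U. x * y) = (\<Prod>y\<in>?U. y)" using prod.reindex_bij_betw[OF bij, of id] by simp
  moreover have "(\<Prod>y\<in>?U. x * y) = x ^ card ?U * (\<Prod>y\<in>?U. y)" by (simp add: prod.distrib)
  moreover have "(\<Prod>y\<in>?U. y) \<noteq> 0" by simp
  ultimately have "x ^ card ?U = 1" by simp
  moreover have "card ?U = card (UNIV :: 'a set) - 1" by (simp add: card_Diff_singleton)
  ultimately have "x ^ (card (UNIV :: 'a set) - 1) = 1" by simp
  then have "x * x ^ (card (UNIV :: 'a set) - 1) = x" by simp
  moreover have "card (UNIV :: 'a set) = Suc (card (UNIV :: 'a set) - 1)" using finite_UNIV_card_ge_0[where ?'a='a] by simp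
  ultimately show ?thesis by (metis power_Suc)
qed

lemma neg_one_pow: "(-1::'a::{field,finite}) ^ (card (UNIV :: 'a set) ^ d) = -1"
proof (induction d)
  case 0 then show ?case by simp
next
  case (Suc d)
  have "(-1::'a) ^ (card (UNIV :: 'a set) ^ Suc d) = ((-1::'a) ^ (card (UNIV :: 'a set) ^ d)) ^ card (UNIV :: 'a set)"
    by (simp add: power_mult[symmetric] mult.commute)
  then show ?case using Suc pow_card_field by simp
qed

lemma prod_const_poly: "(\<Prod>x\<in>A. [:f x:]) = [:(\<Prod>x\<in>A. f x)::'a::comm_semiring_1:]"
  by (induction A rule: infinite_finite_induct) (simp_all add: one_pCons mult.commute)

lemma prod_neg: "(\<Prod>a\<in>A. - f a) = (-1) ^ card A * prod f A" for f :: "'b \<Rightarrow> 'c::comm_ring_1"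
  by (induction A rule: infinite_finite_induct) (simp_all add: mult_ac)

lemma fract_poly_sum: "map_poly to_fract (\<Sum>x\<in>A. f x) = (\<Sum>x\<in>A. map_poly to_fract (f x))"
  by (induction A rule: infinite_finite_induct) simp_all

lemma smult_sum_right: "smult c (\<Sum>x\<in>A. f x) = (\<Sum>x\<in>A. smult c (f x))"
  by (induction A rule: infinite_finite_induct) (simp_all add: smult_add_right)

lemma neg_one_poly_pow: "(-1::'a::comm_ring_1 poly) ^ n = [:(-1) ^ n:]"
  by (induction n) (simp_all add: one_pCons)

theorem theorem4p2p2:
  fixes d :: nat
  shows "(\<Sum>a\<in>(Aplus d :: ('a::{field_gcd,finite}) poly set).
            smult (inverse (to_fract a)) (to_Kt (chi_t a)))
         = smult ((-1) ^ d / to_fract (Ld d)) (wagner_b d :: 'a poly fract poly)"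
proof -
  define S where "S = (Aplus d :: 'a poly set)"
  have fin: "finite S" and cardS: "card S = card (UNIV :: 'a set) ^ d" using Aplus_finite_card S_def by auto
  have S0: "0 \<notin> S" by (auto simp: S_def Aplus_def)
  have sgn: "(-1::'a) ^ (card S - 1) = 1"
  proof -
    have "card S \<ge> 1" using cardS finite_UNIV_card_ge_0[where ?'a='a] by simp
    then have "card S = Suc (card S - 1)" by simp
    then have "(-1::'a) * (-1) ^ (card S - 1) = -1" using neg_one_pow[of d] cardS by (metis power_Suc)
    then show ?thesis by simp
  qed
  have D: "Dd d = (\<Prod>a\<in>S. a)" by (simp add: Dd_def S_def Aplus_0)
  have "(\<Prod>a\<in>S. a) \<noteq> 0" using fin S0 by (subst prod_zero_iff) auto
  then have Dnz: "Dd d \<noteq> (0::'a poly)" using D by simp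
  have Lnz: "Ld d \<noteq> (0::'a poly)"
  proof (cases "d = 0")
    case True then show ?thesis by (simp add: Ld_def)
  next
    case False
    have "{p::'a poly. p \<noteq> 0 \<and> degree p = d} \<subseteq> (\<lambda>(c,p). smult c p) ` (UNIV \<times> Aplus d)"
    proof
      fix p :: "'a poly" assume p: "p \<in> {p. p \<noteq> 0 \<and> degree p = d}"
      then have "smult (inverse (lead_coeff p)) p \<in> Aplus d" by (auto simp: Aplus_def)
      moreover have "p = smult (lead_coeff p) (smult (inverse (lead_coeff p)) p)" using p by (auto simp: field_simps)
      ultimately show "p \<in> (\<lambda>(c,p). smult c p) ` (UNIV \<times> Aplus d)" by (auto intro!: image_eqI[where x="(lead_coeff p, smult (inverse (lead_coeff p)) p)"])
    qed
    moreover have "finite ((\<lambda>(c,p). smult c p) ` (UNIV \<times> (Aplus d :: 'a poly set)))"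
      using Aplus_finite_card[where ?'a='a, of d] by (intro finite_imageI finite_cartesian_product) auto
    ultimately have "finite {p::'a poly. p \<noteq> 0 \<and> degree p = d}" by (rule finite_subset)
    then show ?thesis using False by (simp add: Ld_def Lcm_0_iff)
  qed
  define P where "P b = (\<Prod>a\<in>S - {b}. a)" for b
  have negprod: "(\<Prod>a\<in>S - {b}. - a) = P b" if "b \<in> S" for b
  proof -
    have "(\<Prod>a\<in>S - {b}. - a) = (-1) ^ card (S - {b}) * P b" by (simp add: prod_neg P_def)
    also have "(-1::'a poly) ^ card (S - {b}) = [:(-1::'a) ^ (card S - 1):]"
      using that fin by (simp add: card_Diff_singleton neg_one_poly_pow)
    finally show ?thesis using sgn by (simp add: one_pCons[symmetric])
  qed
  have Db: "Dd d = b * P b" if "b \<in> S" for b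
    using D fin that by (simp add: P_def prod.remove)
  have Pnz: "P b \<noteq> 0" if "b \<in> S" for b using Db[OF that] Dnz by auto
  have M0: "poly (Md d chi_t) 0 = (\<Sum>b\<in>S. smult (P b) (chi_t b))"
  proof -
    have "poly (Md d chi_t) 0 = (\<Sum>b\<in>S. chi_t b * (\<Prod>a\<in>S - {b}. [:- a:]))"
      by (simp add: Md_def S_def poly_sum poly_prod)
    also have "\<dots> = (\<Sum>b\<in>S. smult (P b) (chi_t b))"
    proof (rule sum.cong[OF refl])
      fix b assume b: "b \<in> S"
      have "(\<Prod>a\<in>S - {b}. [:- a:]) = [:P b:]"
        using prod_const_poly[of "\<lambda>a. - a" "S - {b}"] negprod[OF b] by simp
      then show "chi_t b * (\<Prod>a\<in>S - {b}. [:- a:]) = smult (P b) (chi_t b)" by simp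
    qed
    finally show ?thesis .
  qed
  have sc: "(-1) ^ d / to_fract (Ld d) * ((-1) ^ d * to_fract (Ld d) / to_fract (Dd d))
        = inverse (to_fract (Dd d) :: 'a poly fract)"
  proof -
    have "(-1::'a poly fract) ^ d * (-1) ^ d = 1" by (simp flip: power_add)
    then show ?thesis using Lnz by (simp add: field_simps)
  qed
  have "smult ((-1) ^ d / to_fract (Ld d)) (wagner_b d :: 'a poly fract poly)
      = smult (inverse (to_fract (Dd d))) (to_Kt (\<Sum>b\<in>S. smult (P b) (chi_t b)))"
    unfolding wagner_b_def M0 smult_smult sc ..
  also have "\<dots> = (\<Sum>b\<in>S. smult (inverse (to_fract (Dd d)) * to_fract (P b)) (to_Kt (chi_t b)))"
    by (simp add: to_Kt_def fract_poly_sum smult_sum_right)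
  also have "\<dots> = (\<Sum>b\<in>S. smult (inverse (to_fract b)) (to_Kt (chi_t b)))"
  proof (rule sum.cong[OF refl])
    fix b assume b: "b \<in> S"
    have "inverse (to_fract (Dd d)) * to_fract (P b) = inverse (to_fract b)"
      using Db[OF b] Pnz[OF b] by (simp add: field_simps)
    then show "smult (inverse (to_fract (Dd d)) * to_fract (P b)) (to_Kt (chi_t b))
        = smult (inverse (to_fract b)) (to_Kt (chi_t b))" by simp
  qed
  finally show ?thesis by (simp add: S_def)
qed

end
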